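(* Let $n_1 \ge 3$ be an odd integer, $p$ a prime with $p \equiv 1 \pmod{n_1}$, $\omega = e^{2\pi\imath/p}$, $r$ a primitive root modulo $p$, and $\sigma$ the automorphism of $\mathbb{Q}(\omega)$ with $\sigma(\omega) = \omega^{r}$. Let $m = (p-1)/2$, $\alpha = \prod_{k=0}^{m-1}(1-\omega^{r^k})$, let $\lambda$ be an integer with $\lambda(r-1)\equiv 1 \pmod p$, $z = \omega^{\lambda}\alpha(1-\omega)$, and $x = \sum_{k=1}^{(p-1)/n_1}\sigma^{k n_1}(z)$. Then the $n_1\times n_1$ matrix $G_{n_1} = \frac{1}{p}\big[\sigma^{(i+j) \bmod n_1}(x)\big]_{i,j=0}^{n_1-1}$ (a circulant-type matrix whose rows are successive cyclic left shifts of $\frac1p(x,\sigma(x),\dots,\sigma^{n_1-1}(x))$) is unitary, i.e. $G_{n_1}G_{n_1}^{\dagger} = I_{n_1}$; equivalently, the lattice it generates is orthogonal.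
   Context: $x$ lies in the subfield $\mathbb{K}'$ of $\mathbb{Q}(\omega)$ fixed by $\sigma^{n_1}$, which has degree $n_1$ over $\mathbb{Q}$; $\sigma$ restricted to $\mathbb{K}'$ has order $n_1$, so $\sigma^{(i+j)\bmod n_1}(x) = \sigma^{i+j}(x)$. *)

theory Defs
  imports Complex_Main "HOL-Number_Theory.Number_Theory"
    "HOL-Computational_Algebra.Polynomial"
    "Jordan_Normal_Form.Schur_Decomposition"
begin

definition simple_ext_Q :: "complex \<Rightarrow> complex set" where
  "simple_ext_Q w = (\<lambda>q :: rat poly. poly (map_poly of_rat q) w) ` UNIV"

definition field_aut_on :: "complex set \<Rightarrow> (complex \<Rightarrow> complex) \<Rightarrow> bool" where
  "field_aut_on K s \<longleftrightarrow> bij_betw s K K \<and> s 1 = 1 \<and>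
     (\<forall>a\<in>K. \<forall>b\<in>K. s (a + b) = s a + s b \<and> s (a * b) = s a * s b)"

end

theory Submission
  imports Defs
begin

lemma map_poly_of_rat_pCons0:
  "map_poly (of_rat :: rat \<Rightarrow> complex) (pCons 0 X) = pCons 0 (map_poly of_rat X)"
  by (cases "X = 0") (simp_all add: map_poly_pCons)

lemma map_poly_of_rat_mult:
  "map_poly (of_rat :: rat \<Rightarrow> complex) (q1 * q2) = map_poly of_rat q1 * map_poly of_rat q2"
  by (induct q1) (simp_all add: map_poly_pCons map_poly_of_rat_pCons0 of_rat_hom.map_poly_hom_add of_rat_hom.map_poly_hom_smult)

lemma K_intro: "a = poly (map_poly of_rat q) w \<Longrightarrow> a \<in> simple_ext_Q w"
  unfolding simple_ext_Q_def by blast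

lemma K_elim: "a \<in> simple_ext_Q w \<Longrightarrow> \<exists>q. a = poly (map_poly of_rat q) w"
  unfolding simple_ext_Q_def by blast

lemma K_add: "a \<in> simple_ext_Q w \<Longrightarrow> b \<in> simple_ext_Q w \<Longrightarrow> a + b \<in> simple_ext_Q w"
proof -
  assume "a \<in> simple_ext_Q w" "b \<in> simple_ext_Q w"
  then obtain q1 q2 where "a = poly (map_poly of_rat q1) w" "b = poly (map_poly of_rat q2) w"
    using K_elim by metis
  then have "a + b = poly (map_poly of_rat (q1 + q2)) w"
    by (simp add: of_rat_hom.map_poly_hom_add)
  then show ?thesis by (rule K_intro)
qed

lemma K_mult: "a \<in> simple_ext_Q w \<Longrightarrow> b \<in> simple_ext_Q w \<Longrightarrow> a * b \<in> simple_ext_Q w"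
proof -
  assume "a \<in> simple_ext_Q w" "b \<in> simple_ext_Q w"
  then obtain q1 q2 where "a = poly (map_poly of_rat q1) w" "b = poly (map_poly of_rat q2) w"
    using K_elim by metis
  then have "a * b = poly (map_poly of_rat (q1 * q2)) w"
    by (simp add: map_poly_of_rat_mult)
  then show ?thesis by (rule K_intro)
qed

lemma K_neg: "a \<in> simple_ext_Q w \<Longrightarrow> - a \<in> simple_ext_Q w"
proof -
  assume "a \<in> simple_ext_Q w"
  then obtain q1 where "a = poly (map_poly of_rat q1) w"
    using K_elim by metis
  then have "- a = poly (map_poly of_rat (- q1)) w"
  proof -
    have "map_poly (of_rat::rat\<Rightarrow>complex) (-q1) = - map_poly of_rat q1"
      by (rule poly_eqI) (simp add: coeff_map_poly of_rat_minus)
    then show ?thesis using \<open>a = _\<close> by simp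
  qed
  then show ?thesis by (rule K_intro)
qed

lemma K_pow: "w ^ n \<in> simple_ext_Q w"
proof -
  have "w ^ n = poly (map_poly of_rat (monom 1 n)) w"
    by (simp add: map_poly_monom poly_monom)
  then show ?thesis by (rule K_intro)
qed

lemma K_one: "1 \<in> simple_ext_Q w"
  using K_pow[of w 0] by simp

lemma K_zero: "0 \<in> simple_ext_Q w"
  using K_add[OF K_one K_neg[OF K_one]] by simp

lemma K_diff: "a \<in> simple_ext_Q w \<Longrightarrow> b \<in> simple_ext_Q w \<Longrightarrow> a - b \<in> simple_ext_Q w"
  using K_add[OF _ K_neg] by (metis diff_conv_add_uminus)

lemma K_sum: "(\<And>x. x \<in> A \<Longrightarrow> f x \<in> simple_ext_Q w) \<Longrightarrow> sum f A \<in> simple_ext_Q w"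
  by (induct A rule: infinite_finite_induct) (auto intro: K_zero K_add)

lemma K_prod: "(\<And>x. x \<in> A \<Longrightarrow> f x \<in> simple_ext_Q w) \<Longrightarrow> prod f A \<in> simple_ext_Q w"
  by (induct A rule: infinite_finite_induct) (auto intro: K_one K_mult)

lemma K_sign: "(-1::complex) ^ n \<in> simple_ext_Q w"
  by (induct n) (auto intro: K_one K_mult K_neg)

lemma aut_in: "field_aut_on K s \<Longrightarrow> a \<in> K \<Longrightarrow> s a \<in> K"
  unfolding field_aut_on_def bij_betw_def by blast

lemma aut_add: "field_aut_on K s \<Longrightarrow> a \<in> K \<Longrightarrow> b \<in> K \<Longrightarrow> s (a + b) = s a + s b"
  unfolding field_aut_on_def by blast

lemma aut_mult: "field_aut_on K s \<Longrightarrow> a \<in> K \<Longrightarrow> b \<in> K \<Longrightarrow> s (a * b) = s a * s b"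
  unfolding field_aut_on_def by blast

lemma aut_one: "field_aut_on K s \<Longrightarrow> s 1 = 1"
  unfolding field_aut_on_def by blast

lemma aut_zero: "field_aut_on (simple_ext_Q w) s \<Longrightarrow> s 0 = 0"
  using aut_add[of "simple_ext_Q w" s 0 0] K_zero[of w] by simp

lemma aut_neg: "field_aut_on (simple_ext_Q w) s \<Longrightarrow> a \<in> simple_ext_Q w \<Longrightarrow> s (- a) = - s a"
  using aut_add[of "simple_ext_Q w" s a "-a"] K_neg[of a w] aut_zero[of w s]
  by (metis add_eq_0_iff)

lemma aut_diff: "field_aut_on (simple_ext_Q w) s \<Longrightarrow> a \<in> simple_ext_Q w \<Longrightarrow> b \<in> simple_ext_Q w
   \<Longrightarrow> s (a - b) = s a - s b"
  using aut_add[of "simple_ext_Q w" s a "-b"] K_neg[of b w] aut_neg[of w s b] by simp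

lemma aut_sum: "field_aut_on (simple_ext_Q w) s \<Longrightarrow> (\<And>x. x \<in> A \<Longrightarrow> f x \<in> simple_ext_Q w)
   \<Longrightarrow> s (sum f A) = (\<Sum>x\<in>A. s (f x))"
proof (induct A rule: infinite_finite_induct)
  case (infinite A) then show ?case by (simp add: aut_zero)
next
  case empty then show ?case by (simp add: aut_zero)
next
  case (insert x F)
  then show ?case by (simp add: aut_add K_sum)
qed

lemma aut_prod: "field_aut_on (simple_ext_Q w) s \<Longrightarrow> (\<And>x. x \<in> A \<Longrightarrow> f x \<in> simple_ext_Q w)
   \<Longrightarrow> s (prod f A) = (\<Prod>x\<in>A. s (f x))"
proof (induct A rule: infinite_finite_induct)
  case (infinite A) then show ?case by (simp add: aut_one)
next
  case empty then show ?case by (simp add: aut_one)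
next
  case (insert x F)
  then show ?case by (simp add: aut_mult K_prod)
qed

lemma funpow_in: "field_aut_on K s \<Longrightarrow> a \<in> K \<Longrightarrow> (s ^^ n) a \<in> K"
  by (induct n) (auto intro: aut_in)

lemma funpow_sum: "field_aut_on (simple_ext_Q w) s \<Longrightarrow> (\<And>x. x \<in> A \<Longrightarrow> f x \<in> simple_ext_Q w)
   \<Longrightarrow> (s ^^ n) (sum f A) = (\<Sum>x\<in>A. (s ^^ n) (f x))"
proof (induct n)
  case 0 then show ?case by simp
next
  case (Suc n)
  then show ?case by (simp add: aut_sum funpow_in)
qed

lemma aut_pow: "field_aut_on (simple_ext_Q w) s \<Longrightarrow> s w = w ^ r \<Longrightarrow> s (w ^ n) = w ^ (n * r)"
proof (induct n)
  case 0 then show ?case by (simp add: aut_one)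
next
  case (Suc n)
  have "s (w ^ Suc n) = s (w * w ^ n)" by simp
  also have "\<dots> = s w * s (w ^ n)"
    using Suc.prems K_pow[of w 1] K_pow[of w n] by (intro aut_mult) auto
  also have "\<dots> = w ^ (Suc n * r)" using Suc by (simp add: power_add)
  finally show ?case .
qed

lemma funpow_pow: "field_aut_on (simple_ext_Q w) s \<Longrightarrow> s w = w ^ r \<Longrightarrow> (s ^^ e) (w ^ n) = w ^ (n * r ^ e)"
proof (induct e)
  case 0 then show ?case by simp
next
  case (Suc e)
  then show ?case by (simp add: aut_pow ac_simps)
qed


lemma omega_cis:
  fixes p :: nat
  assumes "\<omega> = exp (2 * pi * \<i> / of_nat p)"
  shows "\<omega> = cis (2 * pi / real p)"
  using assms by (simp add: cis_conv_exp mult.commute)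

lemma omega_p:
  fixes p :: nat
  assumes "\<omega> = exp (2 * pi * \<i> / of_nat p)" "p \<ge> 1"
  shows "\<omega> ^ p = 1"
proof -
  have "\<omega> ^ p = cis (real p * (2 * pi / real p))" using omega_cis[OF assms(1)] by (simp add: DeMoivre)
  also have "real p * (2 * pi / real p) = 2 * pi * 1" using assms(2) by simp
  finally show ?thesis using cis_multiple_2pi[of 1] by simp
qed

lemma omega_pow_one:
  fixes p :: nat
  assumes "\<omega> = exp (2 * pi * \<i> / of_nat p)" "p \<ge> 1"
  shows "\<omega> ^ a = 1 \<longleftrightarrow> p dvd a"
proof
  assume "\<omega> ^ a = 1"
  then have "cis (real a * (2 * pi / real p)) = 1" using omega_cis[OF assms(1)] by (simp add: DeMoivre)
  then have "cos (real a * (2 * pi / real p)) = 1" by (simp add: complex_eq_iff)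
  then obtain n :: int where n: "real a * (2 * pi / real p) = real_of_int n * 2 * pi" using cos_one_2pi_int by metis
  then have "real a = real_of_int n * real p" using assms(2) by (simp add: field_simps)
  then have "int a = n * int p" by (metis of_int_eq_iff of_int_mult of_int_of_nat_eq)
  then have "int p dvd int a" by simp
  then show "p dvd a" by simp
next
  assume "p dvd a"
  then obtain q where "a = p * q" by blast
  then show "\<omega> ^ a = 1" using omega_p[OF assms] by (simp add: power_mult)
qed

lemma omega_pow_mod0:
  fixes p :: nat
  assumes "\<omega> = exp (2 * pi * \<i> / of_nat p)" "p \<ge> 1"
  shows "\<omega> ^ a = \<omega> ^ (a mod p)"
proof -
  have "a = p * (a div p) + a mod p" by simp
  then have "\<omega> ^ a = (\<omega> ^ p) ^ (a div p) * \<omega> ^ (a mod p)" by (metis power_add power_mult)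
  then show ?thesis using omega_p[OF assms] by simp
qed

lemma omega_pow_eq:
  fixes p :: nat
  assumes om: "\<omega> = exp (2 * pi * \<i> / of_nat p)" and p1: "p \<ge> 1"
  shows "\<omega> ^ a = \<omega> ^ b \<longleftrightarrow> a mod p = b mod p"
proof
  assume "a mod p = b mod p"
  then show "\<omega> ^ a = \<omega> ^ b" using omega_pow_mod0[OF om p1, of a] omega_pow_mod0[OF om p1, of b] by simp
next
  assume e: "\<omega> ^ a = \<omega> ^ b"
  have ne: "\<omega> \<noteq> 0" using om by simp
  have main: "x = y" if "x < p" "y < p" "x \<le> y" "\<omega> ^ x = \<omega> ^ y" for x y
  proof -
    have "\<omega> ^ y = \<omega> ^ x * \<omega> ^ (y - x)" using that(3) by (simp add: power_add[symmetric])
    then have "\<omega> ^ (y - x) = 1" using that(4) ne by simp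
    then have "p dvd (y - x)" using omega_pow_one[OF om p1] by simp
    moreover have "y - x < p" using that by simp
    ultimately have "y - x = 0" using dvd_imp_le by (cases "y - x = 0") auto
    then show ?thesis using that(3) by simp
  qed
  have "\<omega> ^ (a mod p) = \<omega> ^ (b mod p)" using e omega_pow_mod0[OF om p1, of a] omega_pow_mod0[OF om p1, of b] by simp
  moreover have "a mod p < p" "b mod p < p" using p1 by simp_all
  ultimately show "a mod p = b mod p"
    using main[of "a mod p" "b mod p"] main[of "b mod p" "a mod p"] by (cases "a mod p \<le> b mod p") auto
qed

lemma omega_pow_mod:
  fixes p :: nat
  assumes "\<omega> = exp (2 * pi * \<i> / of_nat p)" "p \<ge> 1"
  shows "\<omega> ^ a = \<omega> ^ (a mod p)"
  using omega_pow_eq[OF assms] by simp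

lemma omega_pow_cong:
  fixes p :: nat
  assumes "\<omega> = exp (2 * pi * \<i> / of_nat p)" "p \<ge> 1" "[a = b] (mod p)"
  shows "\<omega> ^ a = \<omega> ^ b"
  using omega_pow_eq[OF assms(1,2)] assms(3) by (simp add: cong_def)

lemma omega_ne0: "\<omega> = exp (2 * pi * \<i> / of_nat p) \<Longrightarrow> \<omega> \<noteq> 0"
  by simp

lemma omega_norm: "\<omega> = exp (2 * pi * \<i> / of_nat p) \<Longrightarrow> norm \<omega> = 1"
  using omega_cis[of \<omega> p] by simp

lemma omega_cnj:
  fixes p :: nat
  assumes "\<omega> = exp (2 * pi * \<i> / of_nat p)" "p \<ge> 1"
  shows "cnj (\<omega> ^ a) = \<omega> ^ ((p - 1) * a)"
proof -
  have n: "norm (\<omega> ^ a) = 1" using omega_norm[OF assms(1)] by (simp add: norm_power)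
  have 1: "\<omega> ^ a * cnj (\<omega> ^ a) = 1"
    using complex_norm_square[of "\<omega> ^ a"] n by simp
  have "\<omega> ^ a * \<omega> ^ ((p - 1) * a) = \<omega> ^ (p * a)"
    using assms(2) by (simp add: power_add[symmetric] algebra_simps)
  also have "\<dots> = 1" using omega_pow_one[OF assms] by simp
  finally have 2: "\<omega> ^ a * \<omega> ^ ((p - 1) * a) = 1" .
  have "\<omega> ^ a \<noteq> 0" using assms by simp
  then show ?thesis using 1 2
    by (metis mult.left_commute mult.right_neutral)
qed

lemma sum_pow_units:
  fixes w :: complex
  assumes "w ^ p = 1" "p > 0"
  shows "(\<Sum>a\<in>{0<..<p}. w ^ a) = (if w = 1 then of_nat p - 1 else -1)"
proof -
  have "{..<p} = insert 0 {0<..<p}" using assms(2) by auto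
  then have "(\<Sum>a<p. w ^ a) = 1 + (\<Sum>a\<in>{0<..<p}. w ^ a)" by simp
  moreover have "(\<Sum>a<p. w ^ a) = (if w = 1 then of_nat p else 0)"
    using sum_gp_strict[of w p] assms by auto
  ultimately have e: "1 + (\<Sum>a\<in>{0<..<p}. w ^ a) = (if w = 1 then of_nat p else 0)" by simp
  have "(\<Sum>a\<in>{0<..<p}. w ^ a) = (if w = 1 then of_nat p else 0) - 1"
    using e add_diff_cancel_left'[of 1 "\<Sum>a\<in>{0<..<p}. w ^ a"] by simp
  then show ?thesis by simp
qed

lemma prod_one_minus_omega:
  fixes p :: nat
  assumes om: "\<omega> = exp (2 * pi * \<i> / of_nat p)" and p2: "p \<ge> 2"
  shows "(\<Prod>a\<in>{0<..<p}. (1 - \<omega> ^ a)) = of_nat p"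
proof -
  have p1: "p \<ge> 1" using p2 by simp
  define P1 where "P1 = (\<Prod>a\<in>{0<..<p}. [:- (\<omega> ^ a), 1:])"
  define P2 where "P2 = (\<Sum>k<p. monom (1::complex) k)"
  define A where "A = (\<lambda>a. \<omega> ^ a) ` {0<..<p}"
  have inj: "inj_on (\<lambda>a. \<omega> ^ a) {0<..<p}"
    unfolding inj_on_def using omega_pow_eq[OF om p1] by auto
  have cardA: "card A = p - 1" unfolding A_def using card_image[OF inj] by simp
  have dm: "degree P1 = sum (degree \<circ> (\<lambda>a. [:- (\<omega> ^ a), 1:])) {0<..<p} \<and>
      coeff P1 (sum (degree \<circ> (\<lambda>a. [:- (\<omega> ^ a), 1:])) {0<..<p}) = 1"
    unfolding P1_def by (rule degree_prod_sum_monic) auto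
  have sd: "sum (degree \<circ> (\<lambda>a. [:- (\<omega> ^ a), 1:])) {0<..<p} = p - 1" by simp
  have c2: "coeff P2 (p - 1) = 1"
    unfolding P2_def using p1 by (simp add: coeff_sum coeff_monom)
  have d2: "degree P2 \<le> p - 1"
    unfolding P2_def by (rule degree_sum_le) (auto intro: order.trans[OF degree_monom_le])
  have "P1 = P2"
  proof (rule poly_eqI_degree_lead_coeff[where n = "p - 1" and A = A])
    show "coeff P1 (p - 1) = coeff P2 (p - 1)" using dm sd c2 by simp
    show "p - 1 \<le> card A" using cardA by simp
    show "degree P1 \<le> p - 1" using dm sd by simp
    show "degree P2 \<le> p - 1" by (rule d2)
    fix x assume "x \<in> A"
    then obtain a where a: "a \<in> {0<..<p}" "x = \<omega> ^ a" unfolding A_def by auto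
    have "poly P1 x = 0"
      unfolding P1_def poly_prod using a by (auto intro!: prod_zero)
    moreover have "poly P2 x = 0"
    proof -
      have "poly P2 x = (\<Sum>k<p. x ^ k)" unfolding P2_def by (simp add: poly_sum poly_monom)
      moreover have "x \<noteq> 1" using a omega_pow_one[OF om p1, of a] by auto
      moreover have "x ^ p = 1" using a omega_pow_one[OF om p1, of "a * p"] by (simp add: power_mult[symmetric])
      ultimately show ?thesis by (simp add: sum_gp_strict)
    qed
    ultimately show "poly P1 x = poly P2 x" by simp
  qed
  then have "poly P1 1 = poly P2 1" by simp
  then show ?thesis unfolding P1_def P2_def by (simp add: poly_prod poly_sum poly_monom)
qed

lemma primroot_facts:
  assumes "prime p" "residue_primroot p r"
  shows "ord p r = p - 1" "coprime p r" "r > 0"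
    "bij_betw (\<lambda>i. r ^ i mod p) {..<p - 1} {0<..<p}"
proof -
  show "ord p r = p - 1" "coprime p r"
    using assms by (auto simp: residue_primroot_def totient_prime)
  then show "r > 0" using assms prime_gt_1_nat[of p] by (cases "r = 0") auto
  show "bij_betw (\<lambda>i. r ^ i mod p) {..<p - 1} {0<..<p}"
    using residue_primroot_is_generator[of p r] assms prime_gt_1_nat[of p]
    by (simp add: totient_prime totatives_prime)
qed

lemma primroot_exp_cong:
  assumes "prime p" "residue_primroot p r"
  shows "[r ^ a = r ^ b] (mod p) \<longleftrightarrow> [a = b] (mod (p - 1))"
  using order_divides_expdiff[of p r a b] primroot_facts[OF assms] by simp

lemma primroot_half:
  assumes "prime p" "residue_primroot p r" "odd p"
  shows "[int (r ^ ((p - 1) div 2)) = -1] (mod int p)"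
proof -
  define m where "m = (p - 1) div 2"
  have p2: "p > 2" using assms prime_gt_1_nat[of p] by (cases "p = 2") auto
  have pm: "p - 1 = 2 * m" unfolding m_def using assms(3) by presburger
  have m0: "0 < m" "m < p - 1" using p2 pm by auto
  have "[r ^ (p - 1) = 1] (mod p)" using primroot_facts[OF assms(1,2)] ord[of r p] by simp
  then have "[int (r ^ m) * int (r ^ m) = 1] (mod int p)"
    using pm by (metis cong_int_iff of_nat_1 of_nat_mult power_add mult_2)
  moreover have "int (r ^ m) > 0" using primroot_facts[OF assms(1,2)] by simp
  ultimately have "[int (r ^ m) = 1] (mod int p) \<or> [int (r ^ m) = -1] (mod int p)"
    using cong_square[of "int p"] assms(1) by auto
  moreover have "\<not> [int (r ^ m) = 1] (mod int p)"
  proof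
    assume "[int (r ^ m) = 1] (mod int p)"
    then have "[r ^ m = 1] (mod p)" by (metis cong_int_iff of_nat_1)
    then have "(p - 1) dvd m" using ord_divides[of r m p] primroot_facts[OF assms(1,2)] by simp
    then show False using m0 by (auto dest: dvd_imp_le)
  qed
  ultimately show ?thesis unfolding m_def by blast
qed

lemma cong_neg1_nat:
  assumes "[int a = -1] (mod int p)" "p > 0"
  shows "[a = p - 1] (mod p)"
proof -
  have "[-1 = int p - 1] (mod int p)"
    by (simp add: cong_iff_dvd_diff)
  then have "[int a = int (p - 1)] (mod int p)"
    using assms by (simp add: of_nat_diff) (metis cong_trans)
  then show ?thesis by (simp add: cong_int_iff)
qed

lemma dvd_sum_cong:
  fixes p x y :: nat
  assumes "p > 0"
  shows "p dvd (x + (p - 1) * y) \<longleftrightarrow> [x = y] (mod p)"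
proof -
  obtain q where q: "p = Suc q" using assms by (cases p) auto
  have "int (x + (p - 1) * y) = (int x - int y) + int p * int y"
    using q by (simp add: algebra_simps)
  then have "int p dvd int (x + (p - 1) * y) \<longleftrightarrow> int p dvd (int x - int y)"
    by (metis dvd_add_left_iff dvd_triv_left)
  then show ?thesis
    by (simp add: cong_iff_dvd_diff cong_int_iff[symmetric] del: of_nat_add of_nat_mult) 
qed


lemma aut_sign: "field_aut_on (simple_ext_Q w) s \<Longrightarrow> s ((-1::complex) ^ e) = (-1) ^ e"
proof (induct e)
  case 0 then show ?case by (simp add: aut_one)
next
  case (Suc e)
  have "s ((-1::complex) ^ Suc e) = s (- ((-1) ^ e))" by simp
  also have "\<dots> = - s ((-1) ^ e)" using Suc.prems K_sign by (rule aut_neg)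
  finally show ?case using Suc by simp
qed

lemma alt_sum_even: "even N \<Longrightarrow> (\<Sum>k<N. (-1::complex) ^ k) = 0"
proof -
  assume "even N"
  then obtain t where "N = 2 * t" by blast
  moreover have "(\<Sum>k<2 * t. (-1::complex) ^ k) = 0"
  proof (induct t)
    case 0 then show ?case by simp
  next
    case (Suc t)
    have "2 * Suc t = Suc (Suc (2 * t))" by simp
    then show ?case using Suc by simp
  qed
  ultimately show ?thesis by simp
qed

lemma sum_block0: fixes h :: "nat \<Rightarrow> 'a::comm_monoid_add" and k c :: nat shows "(\<Sum>j<k. h (j + c)) = sum h {c..<c + k}"
  by (induct k) (simp_all add: algebra_simps)

lemma sum_block: fixes h :: "nat \<Rightarrow> 'a::comm_monoid_add" and n a :: nat shows "(\<Sum>j<n. h (j + a * n)) = sum h {a * n..<a * n + n}"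
  by (rule sum_block0)

lemma sum_group: fixes h :: "nat \<Rightarrow> 'a::comm_monoid_add" and n N :: nat shows "(\<Sum>u<N * n. h u) = (\<Sum>a<N. \<Sum>j<n. h (j + a * n))"
  using sum.nat_group[of h n N] by (simp add: sum_block)

lemma prod_split: fixes g :: "nat \<Rightarrow> complex" and m n :: nat shows "(\<Prod>k<m + n. g k) = (\<Prod>k<m. g k) * (\<Prod>k<n. (g (k + m) :: complex))"
  by (induct n) (simp_all add: ac_simps)


theorem mainTheorem3:
  fixes n1 p r :: nat and lam :: int and \<sigma> :: "complex \<Rightarrow> complex"
    and \<omega> \<alpha> z x :: complex and m :: nat and G :: "complex mat"
  assumes n1_odd: "odd n1" and n1_ge: "n1 \<ge> 3"
    and p_prime: "prime p" and p_cong: "[p = 1] (mod n1)"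
    and omega_def: "\<omega> = exp (2 * pi * \<i> / of_nat p)"
    and r_prim: "residue_primroot p r"
    and sigma_aut: "field_aut_on (simple_ext_Q \<omega>) \<sigma>"
    and sigma_omega: "\<sigma> \<omega> = \<omega> ^ r"
    and m_def: "m = (p - 1) div 2"
    and alpha_def: "\<alpha> = (\<Prod>k<m. (1 - \<omega> ^ (r ^ k)))"
    and lam_cong: "[lam * (int r - 1) = 1] (mod int p)"
    and z_def: "z = \<omega> powi lam * \<alpha> * (1 - \<omega>)"
    and x_def: "x = (\<Sum>k = 1..(p - 1) div n1. (\<sigma> ^^ (k * n1)) z)"
    and G_def: "G = mat n1 n1 (\<lambda>(i, j). (\<sigma> ^^ ((i + j) mod n1)) x / of_nat p)"
  shows "G * mat_adjoint G = 1\<^sub>m n1"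
proof -
  note om = omega_def
  have p1: "p > 1" using p_prime prime_gt_1_nat by auto
  then have p1': "p \<ge> 1" by simp
  have p_ne2: "p \<noteq> 2"
  proof
    assume "p = 2"
    then have "2 mod n1 = 1 mod n1" using p_cong by (simp add: cong_def)
    then show False using n1_ge by simp
  qed
  have p_odd: "odd p" using p_prime p_ne2 p1 prime_odd_nat by auto
  have n1_dvd: "n1 dvd p - 1" using p_cong cong_to_1_nat by blast
  define N where "N = (p - 1) div n1"
  have NM: "N * n1 = p - 1" using n1_dvd by (simp add: N_def)
  have N_even: "even N"
  proof -
    have "even (N * n1)" using NM p_odd p1 by simp
    then show ?thesis using n1_odd by simp
  qed
  have N_pos: "N > 0" using NM p1 by (cases N) auto
  have n1_le: "n1 \<le> p - 1"
  proof -
    have "1 * n1 \<le> N * n1" using N_pos by (intro mult_le_mono1) simp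
    then show ?thesis using NM by simp
  qed
  have pm: "p - 1 = 2 * m" using m_def p_odd by presburger
  have r_ord: "ord p r = p - 1" and r_cop: "coprime p r" and r_pos: "r > 0"
    and r_bij: "bij_betw (\<lambda>i. r ^ i mod p) {..<p - 1} {0<..<p}"
    using primroot_facts[OF p_prime r_prim] by auto
  have rm: "[r ^ m = p - 1] (mod p)"
    using primroot_half[OF p_prime r_prim p_odd] cong_neg1_nat p1 m_def by auto
  have r_per: "[r ^ (e + (p - 1)) = r ^ e] (mod p)" for e
    using primroot_exp_cong[OF p_prime r_prim] by (simp add: cong_def)
  have om_ne1: "\<omega> \<noteq> 1" using omega_pow_one[OF om p1', of 1] p1 by auto
  have om_p: "\<omega> ^ p = 1" using omega_pow_one[OF om p1', of p] by simp
  have om_pm1: "\<omega> ^ (p - 1) * \<omega> = 1"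
  proof -
    have "\<omega> ^ (p - 1) * \<omega> = \<omega> ^ (Suc (p - 1))" by (simp only: power_Suc2)
    also have "Suc (p - 1) = p" using p1 by simp
    finally show ?thesis using om_p by simp
  qed

  define K where "K = simple_ext_Q \<omega>"
  note aut = sigma_aut[folded K_def]

  define L where "L = nat (lam mod int p)"
  have powi_L: "\<omega> powi lam = \<omega> ^ L"
  proof -
    have ne: "\<omega> \<noteq> 0" using om by simp
    have "\<omega> powi (lam mod int p + int p * (lam div int p)) = \<omega> powi (lam mod int p) * \<omega> powi (int p * (lam div int p))"
      using ne by (intro power_int_add) simp
    then have "\<omega> powi lam = \<omega> powi (lam mod int p) * \<omega> powi (int p * (lam div int p))"
      by (simp only: mod_mult_div_eq)
    also have "\<omega> powi (int p * (lam div int p)) = 1"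
      using om_p by (simp add: power_int_mult)
    also have "\<omega> powi (lam mod int p) = \<omega> ^ L"
      unfolding L_def using p1 by (simp add: power_int_def)
    finally show ?thesis by simp
  qed
  have L_cong: "[L * (r - 1) = 1] (mod p)"
  proof -
    have "[int L = lam] (mod int p)" unfolding L_def using p1 by (simp add: cong_def)
    then have "[int L * (int r - 1) = lam * (int r - 1)] (mod int p)" by (rule cong_mult) simp
    then have "[int L * (int r - 1) = 1] (mod int p)" using lam_cong by (rule cong_trans)
    moreover have "int (L * (r - 1)) = int L * (int r - 1)" using r_pos by (simp add: of_nat_diff)
    ultimately have "[int (L * (r - 1)) = int 1] (mod int p)" by (metis of_nat_1)
    then show ?thesis by (simp only: cong_int_iff)
  qed
  have sig_omL: "\<sigma> (\<omega> ^ L) = \<omega> ^ L * \<omega>"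
  proof -
    have "\<sigma> (\<omega> ^ L) = \<omega> ^ (L * r)" using aut_pow[OF sigma_aut sigma_omega] by simp
    also have "L * r = L + L * (r - 1)" using r_pos by (cases r) (auto simp: algebra_simps)
    also have "\<omega> ^ (L + L * (r - 1)) = \<omega> ^ L * \<omega> ^ (L * (r - 1))" by (simp add: power_add)
    also have "\<omega> ^ (L * (r - 1)) = \<omega> ^ 1" using omega_pow_cong[OF om p1' L_cong] .
    finally show ?thesis by simp
  qed

  define g where "g k = 1 - \<omega> ^ (r ^ k)" for k
  have gK: "g k \<in> K" for k unfolding g_def K_def by (intro K_diff K_one K_pow)
  have sig_g: "\<sigma> (g k) = g (Suc k)" for k
  proof -
    have "\<sigma> (g k) = \<sigma> 1 - \<sigma> (\<omega> ^ (r ^ k))"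
      unfolding g_def using sigma_aut K_one K_pow by (rule aut_diff)
    also have "\<dots> = 1 - \<omega> ^ (r ^ k * r)"
      using aut_one[OF sigma_aut] aut_pow[OF sigma_aut sigma_omega] by simp
    finally show ?thesis unfolding g_def by (simp add: mult.commute)
  qed
  have alpha_g: "\<alpha> = (\<Prod>k<m. g k)" unfolding alpha_def g_def ..
  have alphaK: "\<alpha> \<in> K" unfolding alpha_g K_def using gK[unfolded K_def] by (intro K_prod)
  have g0: "g 0 = 1 - \<omega>" unfolding g_def by simp
  have g0_ne: "g 0 \<noteq> 0" using g0 om_ne1 by simp
  have gm: "g m = - (\<omega> ^ (p - 1) * g 0)"
  proof -
    have "\<omega> ^ (r ^ m) = \<omega> ^ (p - 1)" using omega_pow_cong[OF om p1' rm] .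
    moreover note om_pm1
    ultimately show ?thesis unfolding g_def g0 by (simp add: algebra_simps)
  qed
  have sig_alpha: "\<sigma> \<alpha> = - (\<omega> ^ (p - 1) * \<alpha>)"
  proof -
    have s1: "\<sigma> \<alpha> = (\<Prod>k<m. g (Suc k))"
      unfolding alpha_g using aut_prod[OF sigma_aut, of "{..<m}" g] gK[unfolded K_def] sig_g by simp
    have "(\<Prod>k<m. g (Suc k)) * g 0 = (\<Prod>k<Suc m. g k)"
      by (subst prod.lessThan_Suc_shift) (simp add: mult.commute)
    also have "\<dots> = \<alpha> * g m" unfolding alpha_g by simp
    finally have "\<sigma> \<alpha> * g 0 = (- (\<omega> ^ (p - 1) * \<alpha>)) * g 0" using s1 gm by simp
    then show ?thesis using g0_ne mult_right_cancel by metis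
  qed
  define \<beta> where "\<beta> = \<omega> ^ L * \<alpha>"
  have betaK: "\<beta> \<in> K" unfolding \<beta>_def using alphaK unfolding K_def by (intro K_mult K_pow)
  have sig_beta: "\<sigma> \<beta> = - \<beta>"
  proof -
    have "\<sigma> \<beta> = \<sigma> (\<omega> ^ L) * \<sigma> \<alpha>"
      unfolding \<beta>_def using sigma_aut K_pow alphaK[unfolded K_def] by (rule aut_mult)
    also have "\<dots> = - (\<omega> ^ L * \<alpha>) * (\<omega> * \<omega> ^ (p - 1))"
      using sig_omL sig_alpha by (simp add: algebra_simps)
    also have "\<omega> * \<omega> ^ (p - 1) = 1" using om_pm1 by (simp add: mult.commute)
    finally show ?thesis unfolding \<beta>_def by simp
  qed
  have z_eq: "z = \<beta> * g 0" unfolding z_def powi_L \<beta>_def g0 by simp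
  have zK: "z \<in> K" unfolding z_eq using betaK gK unfolding K_def by (intro K_mult)

  have step_A: "(\<sigma> ^^ e) z = (-1) ^ e * \<beta> * g e" for e
  proof (induct e)
    case 0 then show ?case using z_eq by simp
  next
    case (Suc e)
    have sK: "(-1::complex) ^ e * \<beta> \<in> K" using betaK unfolding K_def by (intro K_mult K_sign)
    have "(\<sigma> ^^ Suc e) z = \<sigma> ((-1) ^ e * \<beta> * g e)" using Suc by simp
    also have "\<dots> = \<sigma> ((-1) ^ e * \<beta>) * \<sigma> (g e)"
      using aut_mult[OF aut sK gK] .
    also have "\<sigma> ((-1) ^ e * \<beta>) = \<sigma> ((-1) ^ e) * \<sigma> \<beta>"
      using aut_mult[OF aut _ betaK] K_sign[of e \<omega>] unfolding K_def by simp
    finally show ?case using aut_sign[OF sigma_aut, of e] sig_beta sig_g by simp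
  qed

  define f where "f e = (-1::complex) ^ e * \<omega> ^ (r ^ e)" for e
  have f_per: "f (e + (p - 1)) = f e" for e
  proof -
    have "(-1::complex) ^ (e + (p - 1)) = (-1) ^ e" using pm by (simp add: power_add power_mult)
    moreover have "\<omega> ^ (r ^ (e + (p - 1))) = \<omega> ^ (r ^ e)" using omega_pow_cong[OF om p1' r_per] .
    ultimately show ?thesis unfolding f_def by simp
  qed
  define F where "F s = (\<Sum>a<N. f (s + a * n1))" for s
  have F_per: "F (s + n1) = F s" for s
  proof -
    define h where "h a = f (s + a * n1)" for a
    have "F (s + n1) = (\<Sum>a<N. h (Suc a))" unfolding F_def h_def by (simp add: algebra_simps)
    also have "\<dots> = (\<Sum>a<Suc N. h a) - h 0" by (subst sum.lessThan_Suc_shift) simp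
    also have "\<dots> = (\<Sum>a<N. h a) + h N - h 0" by simp
    also have "h N = h 0" unfolding h_def using f_per[of s] NM by simp
    finally show ?thesis unfolding F_def h_def by simp
  qed
  have F_per2: "F (s + q * n1) = F s" for s q
  proof (induct q)
    case 0 then show ?case by simp
  next
    case (Suc q)
    have "F (s + Suc q * n1) = F ((s + q * n1) + n1)" by (simp add: algebra_simps)
    then show ?case using F_per Suc by simp
  qed
  have F_mod: "F (s mod n1) = F s" for s
    using F_per2[of "s mod n1" "s div n1"] by simp

  have step_B: "(\<sigma> ^^ s) x = - \<beta> * F s" for s
  proof -
    have "(\<sigma> ^^ s) x = (\<Sum>k = 1..N. (\<sigma> ^^ s) ((\<sigma> ^^ (k * n1)) z))"
      unfolding x_def N_def[symmetric]
      using funpow_sum[OF sigma_aut, of "{1..N}" "\<lambda>k. (\<sigma> ^^ (k * n1)) z" s] funpow_in[OF aut zK]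
      unfolding K_def by simp
    also have "\<dots> = (\<Sum>k = 1..N. (\<sigma> ^^ (s + k * n1)) z)"
      by (simp add: funpow_add)
    also have "\<dots> = (\<Sum>k = 1..N. (-1) ^ (s + k * n1) * \<beta> - \<beta> * f (s + k * n1))"
      unfolding step_A g_def f_def by (simp add: algebra_simps)
    also have "\<dots> = \<beta> * (\<Sum>k = 1..N. (-1) ^ (s + k * n1)) - \<beta> * (\<Sum>k = 1..N. f (s + k * n1))"
      by (simp add: sum_subtractf sum_distrib_left mult.commute)
    also have "(\<Sum>k = 1..N. (-1::complex) ^ (s + k * n1)) = 0"
    proof -
      have "(\<Sum>k = 1..N. (-1::complex) ^ (s + k * n1)) = (\<Sum>k<N. (-1) ^ (s + Suc k * n1))"
        using sum.atLeast1_atMost_eq[of "\<lambda>k. (-1::complex) ^ (s + k * n1)" N] by simp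
      also have "\<dots> = (\<Sum>k<N. - ((-1) ^ s * (-1) ^ k))"
      proof (rule sum.cong)
        fix k
        have "(-1::complex) ^ (s + Suc k * n1) = (-1) ^ s * ((-1) ^ n1) ^ Suc k"
          by (simp only: power_add mult.commute[of "Suc k" n1] power_mult)
        also have "(-1::complex) ^ n1 = -1" using n1_odd by simp
        finally show "(-1::complex) ^ (s + Suc k * n1) = - ((-1) ^ s * (-1) ^ k)" by simp
      qed simp
      also have "\<dots> = - ((-1) ^ s * (\<Sum>k<N. (-1) ^ k))"
        by (simp add: sum_negf sum_distrib_left)
      also have "\<dots> = 0" using alt_sum_even[OF N_even] by simp
      finally show ?thesis .
    qed
    also have "(\<Sum>k = 1..N. f (s + k * n1)) = F (s + n1)"
      unfolding F_def using sum.atLeast1_atMost_eq[of "\<lambda>k. f (s + k * n1)" N] by (simp add: algebra_simps)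
    finally show ?thesis using F_per by simp
  qed

  have rm_mul: "[(p - 1) * r ^ k = r ^ (k + m)] (mod p)" for k
  proof -
    have "[(p - 1) * r ^ k = r ^ m * r ^ k] (mod p)"
      using rm by (intro cong_mult cong_refl) (rule cong_sym)
    then show ?thesis by (simp add: power_add mult.commute)
  qed
  have cnj_g: "cnj (g k) = g (k + m)" for k
    unfolding g_def using omega_cnj[OF om p1', of "r ^ k"] omega_pow_cong[OF om p1' rm_mul[of k]] by simp
  have beta_norm: "\<beta> * cnj \<beta> = of_nat p"
  proof -
    have oL: "\<omega> ^ L * cnj (\<omega> ^ L) = 1"
    proof -
      have "\<omega> ^ L * cnj (\<omega> ^ L) = \<omega> ^ L * \<omega> ^ ((p - 1) * L)" using omega_cnj[OF om p1'] by simp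
      also have "\<dots> = \<omega> ^ (L + (p - 1) * L)" by (simp add: power_add)
      also have "L + (p - 1) * L = p * L" using p1 by (cases p) auto
      also have "\<omega> ^ (p * L) = 1" using omega_pow_one[OF om p1'] by simp
      finally show ?thesis .
    qed
    have "\<alpha> * cnj \<alpha> = (\<Prod>k<m. g k) * (\<Prod>k<m. g (k + m))"
      unfolding alpha_g by (simp add: cnj_prod cnj_g)
    also have "\<dots> = (\<Prod>k<m + m. g k)" by (rule prod_split[symmetric])
    also have "m + m = p - 1" using pm by simp
    also have "(\<Prod>k<p - 1. g k) = (\<Prod>k<p - 1. 1 - \<omega> ^ (r ^ k mod p))"
      unfolding g_def using omega_pow_mod0[OF om p1'] by simp
    also have "\<dots> = (\<Prod>a\<in>{0<..<p}. 1 - \<omega> ^ a)"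
      using prod.reindex_bij_betw[OF r_bij, of "\<lambda>a. 1 - \<omega> ^ a"] by simp
    also have "\<dots> = of_nat p" using prod_one_minus_omega[OF om] p1 by simp
    finally have aa: "\<alpha> * cnj \<alpha> = of_nat p" .
    have "\<beta> * cnj \<beta> = (\<omega> ^ L * cnj (\<omega> ^ L)) * (\<alpha> * cnj \<alpha>)"
      unfolding \<beta>_def by (simp add: ac_simps)
    then show ?thesis using oL aa by simp
  qed

  have inner: "(\<Sum>u<p - 1. f (i + u) * cnj (f (e + u))) =
      (-1) ^ (i + e) * (if i = e then of_nat p - 1 else -1)"
    if ie: "i < p - 1" "e < p - 1" for i e
  proof -
    define c where "c = r ^ i + (p - 1) * r ^ e"
    have trm: "f (i + u) * cnj (f (e + u)) = (-1) ^ (i + e) * (\<omega> ^ c) ^ (r ^ u mod p)" for u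
    proof -
      have s0: "(-1::complex) ^ u * (-1) ^ u = 1"
      proof -
        have "(-1::complex) ^ u * (-1) ^ u = ((-1) * (-1)) ^ u" by (simp only: power_mult_distrib)
        then show ?thesis by simp
      qed
      have s1: "(-1::complex) ^ (i + u) * (-1) ^ (e + u) = (-1) ^ (i + e)"
      proof -
        have "(-1::complex) ^ (i + u) * (-1) ^ (e + u) = (-1) ^ (i + e) * ((-1) ^ u * (-1) ^ u)"
          by (simp add: power_add ac_simps)
        then show ?thesis using s0 by simp
      qed
      have e1: "r ^ (i + u) + (p - 1) * r ^ (e + u) = c * r ^ u"
        unfolding c_def by (simp add: power_add algebra_simps)
      have e2: "\<omega> ^ (r ^ (i + u)) * \<omega> ^ ((p - 1) * r ^ (e + u)) = \<omega> ^ (c * r ^ u)"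
        using e1 by (metis power_add)
      have e3: "\<omega> ^ (c * r ^ u) = \<omega> ^ (c * (r ^ u mod p))"
        by (rule omega_pow_cong[OF om p1']) (simp add: cong_def mod_mult_right_eq)
      have "f (i + u) * cnj (f (e + u)) =
          ((-1) ^ (i + u) * (-1) ^ (e + u)) * (\<omega> ^ (r ^ (i + u)) * \<omega> ^ ((p - 1) * r ^ (e + u)))"
        unfolding f_def using omega_cnj[OF om p1', of "r ^ (e + u)"] by (simp add: ac_simps)
      also have "\<dots> = (-1) ^ (i + e) * (\<omega> ^ c) ^ (r ^ u mod p)"
        using s1 e2 e3 by (simp add: power_mult)
      finally show ?thesis .
    qed
    have "(\<Sum>u<p - 1. f (i + u) * cnj (f (e + u))) = (-1) ^ (i + e) * (\<Sum>u<p - 1. (\<omega> ^ c) ^ (r ^ u mod p))"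
      by (simp add: trm sum_distrib_left)
    also have "(\<Sum>u<p - 1. (\<omega> ^ c) ^ (r ^ u mod p)) = (\<Sum>a\<in>{0<..<p}. (\<omega> ^ c) ^ a)"
      using sum.reindex_bij_betw[OF r_bij, of "\<lambda>a. (\<omega> ^ c) ^ a"] by simp
    also have "\<dots> = (if \<omega> ^ c = 1 then of_nat p - 1 else -1)"
    proof (rule sum_pow_units)
      show "(\<omega> ^ c) ^ p = 1" using om_p by (metis power_mult mult.commute power_one)
    qed (use p1 in simp)
    also have "(\<omega> ^ c = 1) \<longleftrightarrow> i = e"
    proof -
      have "(\<omega> ^ c = 1) \<longleftrightarrow> p dvd c" by (rule omega_pow_one[OF om p1'])
      also have "\<dots> \<longleftrightarrow> [r ^ i = r ^ e] (mod p)" unfolding c_def using p1 by (intro dvd_sum_cong) simp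
      also have "\<dots> \<longleftrightarrow> [i = e] (mod (p - 1))" by (rule primroot_exp_cong[OF p_prime r_prim])
      also have "\<dots> \<longleftrightarrow> i = e" using ie by (simp add: cong_def)
      finally show ?thesis .
    qed
    finally show ?thesis .
  qed

  have corr: "(\<Sum>j<n1. F (i + j) * cnj (F (k + j))) = (if i = k then of_nat p else 0)"
    if ik: "i < n1" "k < n1" for i k
  proof -
    define h where "h u = f (i + u) * cnj (F (k + u))" for u
    have "(\<Sum>j<n1. F (i + j) * cnj (F (k + j))) = (\<Sum>j<n1. \<Sum>a<N. h (j + a * n1))"
    proof (rule sum.cong[OF refl])
      fix j
      have Fk: "F (k + (j + a * n1)) = F (k + j)" for a
        using F_per2[of "k + j" a] by (simp add: add.assoc)
      have "F (i + j) * cnj (F (k + j)) = (\<Sum>a<N. f (i + j + a * n1) * cnj (F (k + j)))"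
        by (simp only: F_def[of "i + j"] sum_distrib_right)
      also have "\<dots> = (\<Sum>a<N. h (j + a * n1))"
        unfolding h_def using Fk by (simp add: add.assoc)
      finally show "F (i + j) * cnj (F (k + j)) = (\<Sum>a<N. h (j + a * n1))" .
    qed
    also have "\<dots> = (\<Sum>a<N. \<Sum>j<n1. h (j + a * n1))" by (rule sum.swap)
    also have "\<dots> = (\<Sum>u<N * n1. h u)" by (rule sum_group[symmetric])
    also have "\<dots> = (\<Sum>u<p - 1. \<Sum>b<N. f (i + u) * cnj (f (k + b * n1 + u)))"
      unfolding NM h_def F_def by (simp add: cnj_sum sum_distrib_left algebra_simps)
    also have "\<dots> = (\<Sum>b<N. \<Sum>u<p - 1. f (i + u) * cnj (f (k + b * n1 + u)))" by (rule sum.swap)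
    also have "\<dots> = (\<Sum>b<N. (-1) ^ (i + k) * ((-1) ^ b * (if i = k \<and> b = 0 then of_nat p - 1 else -1)))"
    proof (rule sum.cong[OF refl])
      fix b assume b: "b \<in> {..<N}"
      have "k + b * n1 < n1 + b * n1" using ik by simp
      also have "n1 + b * n1 = Suc b * n1" by simp
      also have "Suc b * n1 \<le> N * n1" using b by (intro mult_le_mono1) simp
      finally have e_lt: "k + b * n1 < p - 1" using NM by simp
      have i_lt: "i < p - 1" using ik n1_le by simp
      have iff: "(i = k + b * n1) \<longleftrightarrow> (i = k \<and> b = 0)"
      proof
        assume a: "i = k + b * n1"
        have "b = 0"
        proof (rule ccontr)
          assume "b \<noteq> 0"
          then have "n1 \<le> b * n1" by simp
          then show False using a ik by linarith
        qed
        then show "i = k \<and> b = 0" using a by simp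
      qed simp
      have sg: "(-1::complex) ^ (i + (k + b * n1)) = (-1) ^ (i + k) * (-1) ^ b"
      proof -
        have "(-1::complex) ^ (b * n1) = ((-1) ^ n1) ^ b" by (simp only: mult.commute[of b n1] power_mult)
        also have "(-1::complex) ^ n1 = -1" using n1_odd by simp
        finally show ?thesis by (simp add: power_add)
      qed
      show "(\<Sum>u<p - 1. f (i + u) * cnj (f (k + b * n1 + u))) =
          (-1) ^ (i + k) * ((-1) ^ b * (if i = k \<and> b = 0 then of_nat p - 1 else -1))"
        using inner[OF i_lt e_lt] iff sg by simp
    qed
    also have "\<dots> = (-1) ^ (i + k) * (\<Sum>b<N. (-1) ^ b * (if i = k \<and> b = 0 then of_nat p - 1 else -1))"
      by (simp add: sum_distrib_left)
    also have "(\<Sum>b<N. (-1::complex) ^ b * (if i = k \<and> b = 0 then of_nat p - 1 else -1)) =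
        (if i = k then of_nat p else 0)"
    proof -
      have "(\<Sum>b<N. (-1::complex) ^ b * (if i = k \<and> b = 0 then of_nat p - 1 else -1)) =
          (\<Sum>b<N. (if i = k \<and> b = 0 then of_nat p else 0) - (-1) ^ b)"
        by (rule sum.cong) auto
      also have "\<dots> = (\<Sum>b<N. (if i = k \<and> b = 0 then of_nat p else 0)) - (\<Sum>b<N. (-1::complex) ^ b)"
        by (simp add: sum_subtractf)
      also have "(\<Sum>b<N. (-1::complex) ^ b) = 0" using alt_sum_even[OF N_even] .
      also have "(\<Sum>b<N. (if i = k \<and> b = 0 then (of_nat p :: complex) else 0)) = (if i = k then of_nat p else 0)"
        using N_pos by (cases "i = k") simp_all
      finally show ?thesis by simp
    qed
    finally show ?thesis by simp
  qed

  have dims: "dim_row G = n1" "dim_col G = n1" unfolding G_def by simp_all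
  have adims: "dim_row (mat_adjoint G) = n1" "dim_col (mat_adjoint G) = n1"
    unfolding mat_adjoint_def using dims by simp_all
  have Gij: "G $$ (i, j) = - \<beta> * F (i + j) / of_nat p" if "i < n1" "j < n1" for i j
    unfolding G_def using that step_B F_mod by simp
  have adj: "mat_adjoint G $$ (j, k) = cnj (G $$ (k, j))" if "j < n1" "k < n1" for j k
    unfolding mat_adjoint_def using that dims by (simp add: mat_of_rows_index)
  show ?thesis
  proof (rule eq_matI)
    show "dim_row (G * mat_adjoint G) = dim_row (1\<^sub>m n1)" using dims by simp
    show "dim_col (G * mat_adjoint G) = dim_col (1\<^sub>m n1)" using adims by simp
    fix i k assume "i < dim_row (1\<^sub>m n1)" "k < dim_col (1\<^sub>m n1)"
    then have ik: "i < n1" "k < n1" by simp_all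
    have "(G * mat_adjoint G) $$ (i, k) = (\<Sum>j<n1. G $$ (i, j) * cnj (G $$ (k, j)))"
      using ik dims adims adj by (simp add: scalar_prod_def atLeast0LessThan)
    also have "\<dots> = (\<Sum>j<n1. (\<beta> * cnj \<beta> / (of_nat p * of_nat p)) * (F (i + j) * cnj (F (k + j))))"
      using ik by (intro sum.cong refl) (simp add: Gij field_simps)
    also have "\<dots> = (\<beta> * cnj \<beta> / (of_nat p * of_nat p)) * (\<Sum>j<n1. F (i + j) * cnj (F (k + j)))"
      by (simp add: sum_distrib_left)
    also have "\<dots> = (if i = k then 1 else 0)"
      using corr[OF ik] beta_norm p1 by simp
    also have "\<dots> = 1\<^sub>m n1 $$ (i, k)" using ik by simp
    finally show "(G * mat_adjoint G) $$ (i, k) = 1\<^sub>m n1 $$ (i, k)" .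
  qed
qed

end
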